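(* Let $k\ge1$ and $u,w\in\mathcal S_\infty$ with $u\le_k w$, $u\ne w$. A maximal chain $u=u_0\lessdot_k u_1\lessdot_k\cdots\lessdot_k u_n=w$ of the interval $[u,w]_k$, with $u_i=u_{i-1}(a_i\,b_i)$, $a_i\le k<b_i$, is the CM-chain of $[u,w]_k$ if and only if it has no inversions.
   Context: $\mathcal S_\infty$ is the group of permutations of $\{1,2,\dots\}$ fixing all but finitely many points; $u(a\,b)$ is $u$ with the entries in positions $a,b$ swapped; $\ell$ is the number of inversions. The $k$-Bruhat order $\le_k$ is the reflexive–transitive closure of covers $u\lessdot_k u(a\,b)$ with $a\le k<b$ and $\ell(u(a\,b))=\ell(u)+1$; $[u,w]_k$ is its interval. CM-chain: if $\ell(w)=\ell(u)+1$ it is the unique chain $u\lessdot_k w$. If $\ell(w)>\ell(u)+1$, there are (known) unique integers $a\le k<b$ such that (I) $u(a)<w(a)$ and $w(a)=\max\{w(j):j\le k,\,u(j)<w(j)\}$, and (II) $u(b)>u(a)\ge w(b)$ and $w(b)=\min\{w(j):j>k,\,u(j)>u(a)\ge w(j)\}$; with $u_1=u(a\,b)$ one has $u\lessdot_k u_1\le_k w$, and the CM-chain of $[u,w]_k$ is $u$ followed by the CM-chain of $[u_1,w]_k$. An inversion of the maximal chain above is a pair $(i,j)$ with $1\le i<j\le n$ such that either $w(a_i)<w(a_j)$, or $w(a_i)=w(a_j)$ and $w(b_i)>w(b_j)$. *)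

theory Defs
  imports Main
begin

text \<open>Permutations of the positive integers {1,2,...} fixing all but finitely many
points, represented as functions on nat fixing 0.\<close>
definition S_inf :: "(nat \<Rightarrow> nat) set" where
  "S_inf = {u. bij u \<and> u 0 = 0 \<and> finite {i. u i \<noteq> i}}"

definition pswap :: "(nat \<Rightarrow> nat) \<Rightarrow> nat \<Rightarrow> nat \<Rightarrow> (nat \<Rightarrow> nat)" where
  "pswap u a b = u(a := u b, b := u a)"

definition len :: "(nat \<Rightarrow> nat) \<Rightarrow> nat" where
  "len u = card {(i, j). 1 \<le> i \<and> i < j \<and> u i > u j}"

definition kcover :: "nat \<Rightarrow> (nat \<Rightarrow> nat) \<Rightarrow> (nat \<Rightarrow> nat) \<Rightarrow> bool" where
  "kcover k u v \<longleftrightarrow> (\<exists>a b. 1 \<le> a \<and> a \<le> k \<and> k < b \<and> v = pswap u a b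
                              \<and> len v = len u + 1)"

definition kle :: "nat \<Rightarrow> (nat \<Rightarrow> nat) \<Rightarrow> (nat \<Rightarrow> nat) \<Rightarrow> bool" where
  "kle k = (kcover k)\<^sup>*\<^sup>*"

text \<open>A maximal chain u = u_0 < u_1 < ... < u_n = w of [u,w]_k, encoded by the list
  of pairs (a_i, b_i) with u_i = u_{i-1}(a_i b_i), a_i \<le> k < b_i, each step a k-cover.\<close>
fun kchain :: "nat \<Rightarrow> (nat \<Rightarrow> nat) \<Rightarrow> (nat \<Rightarrow> nat) \<Rightarrow> (nat \<times> nat) list \<Rightarrow> bool" where
  "kchain k u w [] \<longleftrightarrow> u = w"
| "kchain k u w ((a, b) # ps) \<longleftrightarrow>
     1 \<le> a \<and> a \<le> k \<and> k < b \<and> len (pswap u a b) = len u + 1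
     \<and> kchain k (pswap u a b) w ps"

definition condI :: "nat \<Rightarrow> (nat \<Rightarrow> nat) \<Rightarrow> (nat \<Rightarrow> nat) \<Rightarrow> nat \<Rightarrow> bool" where
  "condI k u w a \<longleftrightarrow> u a < w a \<and>
     w a = Max {w j | j. 1 \<le> j \<and> j \<le> k \<and> u j < w j}"

definition condII :: "nat \<Rightarrow> (nat \<Rightarrow> nat) \<Rightarrow> (nat \<Rightarrow> nat) \<Rightarrow> nat \<Rightarrow> nat \<Rightarrow> bool" where
  "condII k u w a b \<longleftrightarrow> u b > u a \<and> u a \<ge> w b \<and>
     w b = Min {w j | j. j > k \<and> u j > u a \<and> u a \<ge> w j}"

inductive cm_chain :: "nat \<Rightarrow> (nat \<Rightarrow> nat) \<Rightarrow> (nat \<Rightarrow> nat) \<Rightarrow> (nat \<times> nat) list \<Rightarrow> bool"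
  for k where
  cm_base: "\<lbrakk>kle k u w; len w = len u + 1; 1 \<le> a; a \<le> k; k < b; w = pswap u a b\<rbrakk>
            \<Longrightarrow> cm_chain k u w [(a, b)]"
| cm_step: "\<lbrakk>kle k u w; len w > len u + 1; 1 \<le> a; a \<le> k; k < b;
             condI k u w a; condII k u w a b; cm_chain k (pswap u a b) w ps\<rbrakk>
            \<Longrightarrow> cm_chain k u w ((a, b) # ps)"

text \<open>Inversions of a chain given by pairs (a_i,b_i), i = 1..n (0-indexed list here).\<close>
definition chain_inversions :: "(nat \<Rightarrow> nat) \<Rightarrow> (nat \<times> nat) list \<Rightarrow> (nat \<times> nat) set" where
  "chain_inversions w ps = {(i, j). i < j \<and> j < length ps \<and>
      (w (fst (ps ! i)) < w (fst (ps ! j)) \<or>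
       (w (fst (ps ! i)) = w (fst (ps ! j)) \<and> w (snd (ps ! i)) > w (snd (ps ! j))))}"

end

theory Submission
  imports Defs
begin


definition invs :: "(nat \<Rightarrow> nat) \<Rightarrow> (nat \<times> nat) set" where
  "invs u = {(i, j). 1 \<le> i \<and> i < j \<and> u i > u j}"

lemma len_invs: "len u = card (invs u)"
  by (simp add: len_def invs_def)

lemma S_inf_inj: "u \<in> S_inf \<Longrightarrow> inj u"
  by (simp add: S_inf_def bij_is_inj)

lemma fin_invs:
  assumes "u \<in> S_inf" shows "finite (invs u)"
proof -
  have fin: "finite {i. u i \<noteq> i}" and inj: "inj u" using assms by (auto simp: S_inf_def bij_is_inj)
  obtain N where N: "{i. u i \<noteq> i} \<subseteq> {..<N}" using fin unfolding finite_nat_set_iff_bounded by blast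
  have fx: "\<And>i. i \<ge> N \<Longrightarrow> u i = i" using N by force
  have lt: "\<And>i. i < N \<Longrightarrow> u i < N"
  proof (rule ccontr)
    fix i assume "i < N" "\<not> u i < N"
    then have "u (u i) = u i" using fx by simp
    then have "u i = i" using inj by (simp add: inj_eq)
    with \<open>i < N\<close> \<open>\<not> u i < N\<close> show False by simp
  qed
  have "invs u \<subseteq> {..<N} \<times> {..<N}"
  proof
    fix p assume "p \<in> invs u"
    then obtain i j where p: "p = (i,j)" "i < j" "u i > u j" by (auto simp: invs_def)
    have "j < N"
    proof (rule ccontr)
      assume "\<not> j < N"
      then have uj: "u j = j" using fx by simp
      show False
      proof (cases "i < N")
        case True then show ?thesis using lt[of i] uj p \<open>\<not> j < N\<close> by simp
      next
        case False then show ?thesis using fx[of i] uj p by simp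
      qed
    qed
    then show "p \<in> {..<N} \<times> {..<N}" using p by auto
  qed
  then show ?thesis by (rule finite_subset) auto
qed

lemma pswap_S_inf:
  assumes "u \<in> S_inf" "a \<ge> 1" "b \<ge> 1" shows "pswap u a b \<in> S_inf"
proof -
  have bu: "bij u" and u0: "u 0 = 0" and fin: "finite {i. u i \<noteq> i}" using assms by (auto simp: S_inf_def)
  let ?t = "\<lambda>x. if x = a then b else if x = b then a else x"
  have eq: "pswap u a b = u \<circ> ?t" by (auto simp: pswap_def fun_eq_iff)
  have "bij ?t" by (rule involuntory_imp_bij) auto
  then have "bij (pswap u a b)" using bu by (simp add: eq bij_comp)
  moreover have "pswap u a b 0 = 0" using u0 assms by (simp add: pswap_def)
  moreover have "finite {i. pswap u a b i \<noteq> i}"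
    by (rule finite_subset[of _ "{i. u i \<noteq> i} \<union> {a,b}"]) (use fin in \<open>auto simp: pswap_def\<close>)
  ultimately show ?thesis by (simp add: S_inf_def)
qed

lemma pswap_pswap: "a \<noteq> b \<Longrightarrow> pswap (pswap u a b) a b = u"
  by (auto simp: pswap_def fun_eq_iff)

definition phi :: "nat \<Rightarrow> nat \<Rightarrow> nat \<times> nat \<Rightarrow> nat \<times> nat" where
  "phi a b p = (case p of (i, j) \<Rightarrow>
     if j = a \<and> i < a then (i, b) else if j = b \<and> i < a then (i, a)
     else if i = a \<and> j > b then (b, j) else if i = b \<and> j > b then (a, j) else (i, j))"

lemma phi_phi: "a < b \<Longrightarrow> phi a b (phi a b p) = p"
  by (cases p) (auto simp: phi_def)

lemma len_swap_ge:
  assumes "u \<in> S_inf" "1 \<le> a" "a < b" "u a < u b"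
  shows "len (pswap u a b) \<ge> len u + 1 + (if (\<exists>c. a < c \<and> c < b \<and> u a < u c \<and> u c < u b) then 2 else 0)"
proof -
  let ?v = "pswap u a b"
  have vS: "?v \<in> S_inf" using pswap_S_inf assms by simp
  define E where "E = {(a,b)} \<union> (if (\<exists>c. a < c \<and> c < b \<and> u a < u c \<and> u c < u b)
      then {(a, SOME c. a < c \<and> c < b \<and> u a < u c \<and> u c < u b), (SOME c. a < c \<and> c < b \<and> u a < u c \<and> u c < u b, b)} else {})"
  have cardE: "card E = 1 + (if (\<exists>c. a < c \<and> c < b \<and> u a < u c \<and> u c < u b) then 2 else 0)"
  proof (cases "\<exists>c. a < c \<and> c < b \<and> u a < u c \<and> u c < u b")
    case True
    define c where "c = (SOME c. a < c \<and> c < b \<and> u a < u c \<and> u c < u b)"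
    have c: "a < c \<and> c < b \<and> u a < u c \<and> u c < u b" unfolding c_def by (rule someI_ex[OF True])
    have "E = {(a,b), (a,c), (c,b)}" using True by (auto simp: E_def c_def)
    then show ?thesis using c True by auto
  next
    case False
    then have "E = {(a,b)}" unfolding E_def by (simp only: if_False) simp
    then show ?thesis using False by simp
  qed
  have inj: "inj_on (phi a b) (invs u)"
    by (rule inj_on_inverseI[where g="phi a b"]) (simp add: phi_phi assms)
  have sub1: "phi a b ` invs u \<subseteq> invs ?v"
  proof
    fix p assume "p \<in> phi a b ` invs u"
    then obtain i j where ij: "(i,j) \<in> invs u" "p = phi a b (i,j)" by auto
    then have h: "1 \<le> i" "i < j" "u i > u j" by (auto simp: invs_def)
    show "p \<in> invs ?v"
      using h ij(2) assms(2,3,4)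
      apply (simp add: phi_def invs_def pswap_def split: if_splits)
      apply (auto)
      done
  qed
  have sub2: "E \<subseteq> invs ?v"
  proof (cases "\<exists>c. a < c \<and> c < b \<and> u a < u c \<and> u c < u b")
    case True
    define c where "c = (SOME c. a < c \<and> c < b \<and> u a < u c \<and> u c < u b)"
    have c: "a < c \<and> c < b \<and> u a < u c \<and> u c < u b" unfolding c_def by (rule someI_ex[OF True])
    have "E = {(a,b), (a,c), (c,b)}" using True by (auto simp: E_def c_def)
    then show ?thesis using c assms by (auto simp: invs_def pswap_def)
  next
    case False
    then have "E = {(a,b)}" unfolding E_def by (simp only: if_False) simp
    then show ?thesis using assms by (auto simp: invs_def pswap_def)
  qed
  have disj: "E \<inter> phi a b ` invs u = {}"
  proof -
    have "\<And>p. p \<in> E \<Longrightarrow> phi a b p \<notin> invs u"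
    proof -
      fix p assume "p \<in> E"
      show "phi a b p \<notin> invs u"
      proof (cases "\<exists>c. a < c \<and> c < b \<and> u a < u c \<and> u c < u b")
        case True
        define c where "c = (SOME c. a < c \<and> c < b \<and> u a < u c \<and> u c < u b)"
        have c: "a < c \<and> c < b \<and> u a < u c \<and> u c < u b" unfolding c_def by (rule someI_ex[OF True])
        have "E = {(a,b), (a,c), (c,b)}" using True by (auto simp: E_def c_def)
        then show ?thesis using c assms \<open>p \<in> E\<close> by (auto simp: invs_def phi_def)
      next
        case False
        then have "E = {(a,b)}" unfolding E_def by (simp only: if_False) simp
        then show ?thesis using assms \<open>p \<in> E\<close> by (auto simp: invs_def phi_def)
      qed
    qed
    moreover have "\<And>p. phi a b (phi a b p) = p" using phi_phi[OF assms(3)] .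
    ultimately show ?thesis by (metis (no_types, lifting) disjoint_iff imageE)
  qed
  have "card (invs ?v) \<ge> card (E \<union> phi a b ` invs u)"
    using sub1 sub2 fin_invs[OF vS] by (intro card_mono) auto
  also have "card (E \<union> phi a b ` invs u) = card E + card (phi a b ` invs u)"
    using disj fin_invs[OF vS] sub1 sub2
    by (intro card_Un_disjoint) (auto intro: finite_subset)
  also have "card (phi a b ` invs u) = card (invs u)" using inj by (rule card_image)
  finally show ?thesis using cardE by (simp add: len_invs)
qed

lemma cover_props:
  assumes "u \<in> S_inf" "1 \<le> a" "a < b" "len (pswap u a b) = len u + 1"
  shows "u a < u b \<and> (\<forall>c. a < c \<and> c < b \<longrightarrow> \<not> (u a < u c \<and> u c < u b))"
proof -
  have "u a \<noteq> u b" using S_inf_inj[OF assms(1)] assms(3) by (auto dest: injD)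
  have "u a < u b"
  proof (rule ccontr)
    assume "\<not> u a < u b"
    then have lt: "pswap u a b a < pswap u a b b" using \<open>u a \<noteq> u b\<close> assms(3) by (simp add: pswap_def)
    have "len (pswap (pswap u a b) a b) \<ge> len (pswap u a b) + 1"
      using len_swap_ge[OF pswap_S_inf[OF assms(1) assms(2)] assms(2,3) lt] assms(2,3) by simp
    then show False using pswap_pswap[of a b u] assms by simp
  qed
  moreover have "\<forall>c. a < c \<and> c < b \<longrightarrow> \<not> (u a < u c \<and> u c < u b)"
    using len_swap_ge[OF assms(1,2,3) \<open>u a < u b\<close>] assms(4) by (auto split: if_splits)
  ultimately show ?thesis by simp
qed



lemma kchain_props:
  "kchain k v w ps \<Longrightarrow> v \<in> S_inf \<Longrightarrow> w \<in> S_inf \<and> len w = len v + length ps \<and> kle k v w"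
proof (induction ps arbitrary: v)
  case Nil then show ?case by (simp add: kle_def)
next
  case (Cons p ps)
  obtain a b where p: "p = (a,b)" by fastforce
  have h: "1 \<le> a" "a \<le> k" "k < b" "len (pswap v a b) = len v + 1" "kchain k (pswap v a b) w ps"
    using Cons.prems by (auto simp: p)
  have S: "pswap v a b \<in> S_inf" using pswap_S_inf[OF Cons.prems(2)] h by simp
  have IH: "w \<in> S_inf \<and> len w = len (pswap v a b) + length ps \<and> kle k (pswap v a b) w"
    using Cons.IH[OF h(5) S] .
  have "kcover k v (pswap v a b)" using h unfolding kcover_def by blast
  then have "kle k v w" using IH unfolding kle_def by (meson converse_rtranclp_into_rtranclp)
  then show ?case using IH h by simp
qed

lemma step_facts:
  assumes "v \<in> S_inf" "1 \<le> a" "a \<le> k" "k < b" "len (pswap v a b) = len v + 1"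
  shows "v a < v b" "\<And>c. a < c \<Longrightarrow> c < b \<Longrightarrow> \<not> (v a < v c \<and> v c < v b)"
    "\<And>p. p \<le> k \<Longrightarrow> v p \<le> pswap v a b p" "\<And>p. k < p \<Longrightarrow> pswap v a b p \<le> v p"
proof -
  have ab: "a < b" using assms by simp
  note cp = cover_props[OF assms(1,2) ab assms(5)]
  show "v a < v b" using cp by simp
  show "\<And>c. a < c \<Longrightarrow> c < b \<Longrightarrow> \<not> (v a < v c \<and> v c < v b)" using cp by blast
  show "\<And>p. p \<le> k \<Longrightarrow> v p \<le> pswap v a b p" using cp assms by (auto simp: pswap_def)
  show "\<And>p. k < p \<Longrightarrow> pswap v a b p \<le> v p" using cp assms by (auto simp: pswap_def)
qed

lemma kchain_mono:
  "kchain k v w ps \<Longrightarrow> v \<in> S_inf \<Longrightarrow> (p \<le> k \<longrightarrow> v p \<le> w p) \<and> (k < p \<longrightarrow> w p \<le> v p)"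
proof (induction ps arbitrary: v)
  case Nil then show ?case by simp
next
  case (Cons q ps)
  obtain a b where p: "q = (a,b)" by fastforce
  have h: "1 \<le> a" "a \<le> k" "k < b" "len (pswap v a b) = len v + 1" "kchain k (pswap v a b) w ps"
    using Cons.prems by (auto simp: p)
  have S: "pswap v a b \<in> S_inf" using pswap_S_inf[OF Cons.prems(2)] h by simp
  note sf = step_facts[OF Cons.prems(2) h(1-4)]
  show ?case using Cons.IH[OF h(5) S] sf(3)[of p] sf(4)[of p] by auto
qed

lemma step_in:
  "kchain k v w ps \<Longrightarrow> v \<in> S_inf \<Longrightarrow> (c,d) \<in> set ps \<Longrightarrow>
    1 \<le> c \<and> c \<le> k \<and> k < d \<and> v c < v d \<and> v c < w c \<and> w d < v d"
proof (induction ps arbitrary: v)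
  case Nil then show ?case by simp
next
  case (Cons q ps)
  obtain a b where p: "q = (a,b)" by fastforce
  have h: "1 \<le> a" "a \<le> k" "k < b" "len (pswap v a b) = len v + 1" "kchain k (pswap v a b) w ps"
    using Cons.prems by (auto simp: p)
  have S: "pswap v a b \<in> S_inf" using pswap_S_inf[OF Cons.prems(2)] h by simp
  note sf = step_facts[OF Cons.prems(2) h(1-4)]
  note mono = kchain_mono[OF h(5) S]
  show ?case
  proof (cases "(c,d) = (a,b)")
    case True
    have "pswap v a b a = v b" "pswap v a b b = v a" using h by (auto simp: pswap_def)
    then show ?thesis using True h sf(1) mono[of a] mono[of b] by auto
  next
    case False
    then have "(c,d) \<in> set ps" using Cons.prems(3) p by auto
    note IH = Cons.IH[OF h(5) S this]
    then show ?thesis using sf(3)[of c] sf(4)[of d] by auto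
  qed
qed

lemma touched:
  "kchain k v w ps \<Longrightarrow> v p \<noteq> w p \<Longrightarrow> \<exists>(c,d)\<in>set ps. p = c \<or> p = d"
proof (induction ps arbitrary: v)
  case Nil then show ?case by simp
next
  case (Cons q ps)
  obtain a b where p: "q = (a,b)" by fastforce
  have h: "kchain k (pswap v a b) w ps"
    using Cons.prems by (auto simp: p)
  show ?case
  proof (cases "p = a \<or> p = b")
    case True then show ?thesis using p by auto
  next
    case False
    then have "pswap v a b p \<noteq> w p" using Cons.prems(2) by (simp add: pswap_def)
    then show ?thesis using Cons.IH[OF h] by auto
  qed
qed

lemma preserve_step:
  assumes inj: "inj v" and "a \<le> k" "k < b" "v a < v b"
    and btw: "\<And>c. a < c \<Longrightarrow> c < b \<Longrightarrow> \<not> (v a < v c \<and> v c < v b)"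
    and pp: "p < p'" "p' \<le> k \<or> k < p" "v p < v p'"
  shows "pswap v a b p < pswap v a b p'"
proof -
  have ne: "\<And>x y. x \<noteq> y \<Longrightarrow> v x \<noteq> v y" using inj by (auto dest: injD)
  show ?thesis
  proof (cases "p' \<le> k")
    case True
    then have "p \<noteq> b" "p' \<noteq> b" using pp assms by auto
    show ?thesis
    proof (cases "p = a")
      case True
      have "v p' \<noteq> v b" using ne \<open>p' \<noteq> b\<close> by blast
      moreover have "\<not> (v a < v p' \<and> v p' < v b)" using btw[of p'] pp True \<open>p' \<le> k\<close> assms by simp
      ultimately show ?thesis using True pp \<open>p \<noteq> b\<close> \<open>p' \<noteq> b\<close> by (auto simp: pswap_def)
    next
      case False
      then show ?thesis using pp \<open>p \<noteq> b\<close> \<open>p' \<noteq> b\<close> assms by (auto simp: pswap_def)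
    qed
  next
    case False
    then have kp: "k < p" using pp by simp
    then have "p \<noteq> a" "p' \<noteq> a" using pp assms by auto
    show ?thesis
    proof (cases "p' = b")
      case True
      have "v p \<noteq> v a" using ne \<open>p \<noteq> a\<close> by blast
      moreover have "\<not> (v a < v p \<and> v p < v b)" using btw[of p] pp True kp assms(2) by (metis le_less_trans)
      ultimately show ?thesis using True pp \<open>p \<noteq> a\<close> \<open>p' \<noteq> a\<close> by (auto simp: pswap_def)
    next
      case False
      then show ?thesis using pp \<open>p \<noteq> a\<close> \<open>p' \<noteq> a\<close> assms by (auto simp: pswap_def)
    qed
  qed
qed

lemma preserve:
  "kchain k v w ps \<Longrightarrow> v \<in> S_inf \<Longrightarrow> p < p' \<Longrightarrow> p' \<le> k \<or> k < p \<Longrightarrow> v p < v p' \<Longrightarrow> w p < w p'"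
proof (induction ps arbitrary: v)
  case Nil then show ?case by simp
next
  case (Cons q ps)
  obtain a b where p: "q = (a,b)" by fastforce
  have h: "1 \<le> a" "a \<le> k" "k < b" "len (pswap v a b) = len v + 1" "kchain k (pswap v a b) w ps"
    using Cons.prems by (auto simp: p)
  have S: "pswap v a b \<in> S_inf" using pswap_S_inf[OF Cons.prems(2)] h by simp
  note sf = step_facts[OF Cons.prems(2) h(1-4)]
  have "pswap v a b p < pswap v a b p'"
    using preserve_step[OF S_inf_inj[OF Cons.prems(2)] h(2,3) sf(1) sf(2) Cons.prems(3,4,5)] .
  then show ?case using Cons.IH[OF h(5) S Cons.prems(3,4)] by simp
qed



definition badp :: "(nat \<Rightarrow> nat) \<Rightarrow> nat \<times> nat \<Rightarrow> nat \<times> nat \<Rightarrow> bool" where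
  "badp w x y \<longleftrightarrow> w (fst x) < w (fst y) \<or> (w (fst x) = w (fst y) \<and> w (snd x) > w (snd y))"

fun noinv :: "(nat \<Rightarrow> nat) \<Rightarrow> (nat \<times> nat) list \<Rightarrow> bool" where
  "noinv w [] = True"
| "noinv w (x # xs) = ((\<forall>y\<in>set xs. \<not> badp w x y) \<and> noinv w xs)"

lemma ci_empty_iff: "chain_inversions w ps = {} \<longleftrightarrow> (\<forall>i j. i < j \<and> j < length ps \<longrightarrow> \<not> badp w (ps!i) (ps!j))"
  by (auto simp: chain_inversions_def badp_def)

lemma noinv_iff: "chain_inversions w ps = {} \<longleftrightarrow> noinv w ps"
proof (induction ps)
  case Nil then show ?case by (simp add: chain_inversions_def)
next
  case (Cons x xs)
  have "(\<forall>i j. i < j \<and> j < length (x#xs) \<longrightarrow> \<not> badp w ((x#xs)!i) ((x#xs)!j)) \<longleftrightarrow>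
        (\<forall>j<length xs. \<not> badp w x (xs!j)) \<and> (\<forall>i j. i < j \<and> j < length xs \<longrightarrow> \<not> badp w (xs!i) (xs!j))"
  proof
    assume H: "\<forall>i j. i < j \<and> j < length (x#xs) \<longrightarrow> \<not> badp w ((x#xs)!i) ((x#xs)!j)"
    show "(\<forall>j<length xs. \<not> badp w x (xs!j)) \<and> (\<forall>i j. i < j \<and> j < length xs \<longrightarrow> \<not> badp w (xs!i) (xs!j))"
    proof (intro conjI allI impI)
      fix j assume "j < length xs" then show "\<not> badp w x (xs!j)" using H[rule_format, of 0 "Suc j"] by simp
    next
      fix i j assume "i < j \<and> j < length xs" then show "\<not> badp w (xs!i) (xs!j)" using H[rule_format, of "Suc i" "Suc j"] by simp
    qed
  next
    assume H: "(\<forall>j<length xs. \<not> badp w x (xs!j)) \<and> (\<forall>i j. i < j \<and> j < length xs \<longrightarrow> \<not> badp w (xs!i) (xs!j))"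
    show "\<forall>i j. i < j \<and> j < length (x#xs) \<longrightarrow> \<not> badp w ((x#xs)!i) ((x#xs)!j)"
    proof (intro allI impI)
      fix i j assume ij: "i < j \<and> j < length (x#xs)"
      then obtain j' where j: "j = Suc j'" by (cases j) auto
      show "\<not> badp w ((x#xs)!i) ((x#xs)!j)"
      proof (cases i)
        case 0 then show ?thesis using H ij j by simp
      next
        case (Suc i') then show ?thesis using H ij j by simp
      qed
    qed
  qed
  moreover have "(\<forall>j<length xs. \<not> badp w x (xs!j)) \<longleftrightarrow> (\<forall>y\<in>set xs. \<not> badp w x y)"
    by (metis in_set_conv_nth)
  ultimately show ?case using Cons.IH by (simp add: ci_empty_iff)
qed

lemma claimF:
  "kchain k v w ps \<Longrightarrow> v \<in> S_inf \<Longrightarrow> (\<forall>(c,d)\<in>set ps. w c < w a) \<Longrightarrow> a \<le> k \<Longrightarrow>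
   v a = w a \<Longrightarrow> k < q \<Longrightarrow> v q > w a \<Longrightarrow> w q < w a \<Longrightarrow> False"
proof (induction ps arbitrary: v)
  case Nil then show ?case by simp
next
  case (Cons p ps)
  obtain c d where p: "p = (c,d)" by fastforce
  have h: "1 \<le> c" "c \<le> k" "k < d" "len (pswap v c d) = len v + 1" "kchain k (pswap v c d) w ps"
    using Cons.prems by (auto simp: p)
  have S: "pswap v c d \<in> S_inf" using pswap_S_inf[OF Cons.prems(2)] h by simp
  note sf = step_facts[OF Cons.prems(2) h(1-4)]
  have wc: "w c < w a" using Cons.prems(3) p by auto
  then have "c \<noteq> a" by auto
  have "d \<noteq> a" "q \<noteq> c" using h Cons.prems by auto
  have va: "pswap v c d a = w a" using \<open>c \<noteq> a\<close> \<open>d \<noteq> a\<close> Cons.prems(5) by (simp add: pswap_def)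
  have all: "\<forall>(c,d)\<in>set ps. w c < w a" using Cons.prems(3) by auto
  show ?case
  proof (cases "d = q")
    case False
    then have "pswap v c d q = v q" using \<open>q \<noteq> c\<close> by (simp add: pswap_def)
    then show ?thesis using Cons.IH[OF h(5) S all Cons.prems(4) va Cons.prems(6)] Cons.prems(7,8) by simp
  next
    case True
    have vq: "pswap v c d q = v c" using True by (simp add: pswap_def)
    have "v c \<noteq> v a" using S_inf_inj[OF Cons.prems(2)] \<open>c \<noteq> a\<close> by (auto dest: injD)
    show ?thesis
    proof (cases "v c > w a")
      case True
      then show ?thesis using Cons.IH[OF h(5) S all Cons.prems(4) va Cons.prems(6)] Cons.prems(8) vq by simp
    next
      case False
      then have vc: "v c < v a" using \<open>v c \<noteq> v a\<close> Cons.prems(5) by simp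
      have "\<not> (c < a \<and> a < d)" using sf(2)[of a] vc Cons.prems(5,7) True by auto
      then have "a < c" using \<open>c \<noteq> a\<close> True Cons.prems(4,6) by auto
      moreover have "pswap v c d a < pswap v c d c" using va True Cons.prems(7) \<open>c \<noteq> a\<close> h(2,3)
        by (simp add: pswap_def)
      ultimately have "w a < w c" using preserve[OF h(5) S, of a c] h(2) by simp
      then show ?thesis using wc by simp
    qed
  qed
qed

lemma claimG:
  "kchain k v w ((a,b) # ps) \<Longrightarrow> v \<in> S_inf \<Longrightarrow> inj w \<Longrightarrow> noinv w ((a,b) # ps) \<Longrightarrow> k < q \<Longrightarrow>
   v q > v a \<Longrightarrow> w q < w b \<Longrightarrow> False"
proof (induction ps arbitrary: v b)
  case Nil
  have h: "1 \<le> a" "a \<le> k" "k < b" "len (pswap v a b) = len v + 1" "w = pswap v a b"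
    using Nil.prems by auto
  note sf = step_facts[OF Nil.prems(2) h(1-4)]
  have "q \<noteq> a" using h Nil.prems by auto
  have "q \<noteq> b" using Nil.prems(7) by auto
  have "w q = v q" "w b = v a" using h(5) \<open>q \<noteq> a\<close> \<open>q \<noteq> b\<close> h(2,3) by (auto simp: pswap_def)
  then show ?case using Nil.prems(6,7) by simp
next
  case (Cons p ps)
  obtain a2 b2 where p: "p = (a2,b2)" by fastforce
  have h: "1 \<le> a" "a \<le> k" "k < b" "len (pswap v a b) = len v + 1" "kchain k (pswap v a b) w (p # ps)"
    using Cons.prems by auto
  let ?v1 = "pswap v a b"
  have S: "?v1 \<in> S_inf" using pswap_S_inf[OF Cons.prems(2)] h by simp
  note sf = step_facts[OF Cons.prems(2) h(1-4)]
  have "q \<noteq> a" using h Cons.prems by auto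
  have "q \<noteq> b" using Cons.prems(7) by auto
  have v1q: "?v1 q = v q" using \<open>q \<noteq> a\<close> \<open>q \<noteq> b\<close> by (simp add: pswap_def)
  have v1a: "?v1 a = v b" and v1b: "?v1 b = v a" using h(2,3) by (auto simp: pswap_def)
  have "\<not> b < q"
  proof
    assume "b < q"
    then have "w b < w q" using preserve[OF h(5) S, of b q] h(3) v1q v1b Cons.prems(6) by simp
    then show False using Cons.prems(7) by simp
  qed
  then have "q < b" using \<open>q \<noteq> b\<close> by simp
  then have "\<not> (v a < v q \<and> v q < v b)" using sf(2)[of q] h(2) Cons.prems(5) by simp
  moreover have "v q \<noteq> v b" using S_inf_inj[OF Cons.prems(2)] \<open>q \<noteq> b\<close> by (auto dest: injD)
  ultimately have vqb: "v q > v b" using Cons.prems(6) by auto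
  have ni: "\<forall>y\<in>set (p # ps). \<not> badp w (a,b) y" "noinv w (p # ps)" using Cons.prems(4) by auto
  show ?case
  proof (cases "a2 = a")
    case True
    have "\<not> badp w (a,b) (a,b2)" using ni(1) p True by auto
    then have "w b \<le> w b2" by (auto simp: badp_def)
    then show ?thesis using Cons.IH[of ?v1 b2] h(5) p True S Cons.prems(3) ni(2) Cons.prems(5,7) v1q v1a vqb
      by simp
  next
    case False
    have wa2: "w a2 \<le> w a" using ni(1) p by (auto simp: badp_def)
    moreover have "w a2 \<noteq> w a" using False Cons.prems(3) by (auto dest: injD)
    ultimately have wa2': "w a2 < w a" by simp
    have all: "\<forall>(c,d)\<in>set (p # ps). w c < w a"
    proof
      fix x assume "x \<in> set (p # ps)"
      obtain c d where x: "x = (c,d)" by fastforce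
      have "w c < w a"
      proof (cases "x = p")
        case True then show ?thesis using x p wa2' by simp
      next
        case False
        then have "x \<in> set ps" using \<open>x \<in> set (p # ps)\<close> by simp
        then have "\<not> badp w (a2,b2) (c,d)" using ni(2) p x by simp
        then show ?thesis using wa2' by (auto simp: badp_def)
      qed
      then show "case x of (c,d) \<Rightarrow> w c < w a" using x by simp
    qed
    have v1aw: "?v1 a = w a"
    proof (rule ccontr)
      assume "?v1 a \<noteq> w a"
      then obtain c d where cd: "(c,d) \<in> set (p # ps)" "a = c \<or> a = d" using touched[OF h(5)] by blast
      have "k < d" using step_in[OF h(5) S cd(1)] by simp
      then show False using cd all h(2) by auto
    qed
    have "w b \<le> ?v1 b" using kchain_mono[OF h(5) S, of b] h(3) by simp
    then have "w q < w a" using Cons.prems(7) v1b sf(1) v1a v1aw by simp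
    then show ?thesis using claimF[OF h(5) S all h(2) v1aw Cons.prems(5)] v1q vqb v1a v1aw by simp
  qed
qed



lemma backdir:
  "kchain k u w ps \<Longrightarrow> u \<in> S_inf \<Longrightarrow> inj w \<Longrightarrow> ps \<noteq> [] \<Longrightarrow> noinv w ps \<Longrightarrow> cm_chain k u w ps"
proof (induction ps arbitrary: u)
  case Nil then show ?case by simp
next
  case (Cons p ps)
  obtain a b where p: "p = (a,b)" by fastforce
  have h: "1 \<le> a" "a \<le> k" "k < b" "len (pswap u a b) = len u + 1" "kchain k (pswap u a b) w ps"
    using Cons.prems by (auto simp: p)
  let ?u1 = "pswap u a b"
  have S: "?u1 \<in> S_inf" using pswap_S_inf[OF Cons.prems(2)] h by simp
  note sf = step_facts[OF Cons.prems(2) h(1-4)]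
  have kc: "kchain k u w ((a,b) # ps)" using Cons.prems(1) p by simp
  note props = kchain_props[OF kc Cons.prems(2)]
  have ni: "\<forall>y\<in>set ps. \<not> badp w (a,b) y" "noinv w ps" using Cons.prems(5) p by auto
  show ?case
  proof (cases "ps = []")
    case True
    then have "w = ?u1" using h(5) by simp
    then show ?thesis using cm_base[of k u w a b] props h p True by simp
  next
    case False
    have cm1: "cm_chain k ?u1 w ps" using Cons.IH[OF h(5) S Cons.prems(3) False ni(2)] .
    have lenw: "len w > len u + 1" using props False by simp
    have v1a: "?u1 a = u b" and v1b: "?u1 b = u a" using h(2,3) by (auto simp: pswap_def)
    have abin: "(a,b) \<in> set ((a,b) # ps)" by simp
    have uaw: "u a < w a" using step_in[OF kc Cons.prems(2) abin] by simp
    have cI: "condI k u w a"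
    proof -
      let ?A = "{w j | j. 1 \<le> j \<and> j \<le> k \<and> u j < w j}"
      have fin: "finite ?A"
        by (rule finite_subset[of _ "w ` {1..k}"]) auto
      have mem: "w a \<in> ?A" using h uaw by auto
      have le: "\<forall>y\<in>?A. y \<le> w a"
      proof
        fix y assume "y \<in> ?A"
        then obtain j where j: "y = w j" "1 \<le> j" "j \<le> k" "u j < w j" by blast
        then obtain c d where cd: "(c,d) \<in> set ((a,b) # ps)" "j = c \<or> j = d"
          using touched[OF kc, of j] by fastforce
        have "k < d" using step_in[OF kc Cons.prems(2) cd(1)] by simp
        then have "j = c" using cd(2) j(3) by auto
        show "y \<le> w a"
        proof (cases "(c,d) = (a,b)")
          case True then show ?thesis using j \<open>j = c\<close> by simp
        next
          case False
          then have "(c,d) \<in> set ps" using cd(1) by auto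
          then have "\<not> badp w (a,b) (c,d)" using ni(1) by blast
          then show ?thesis using j \<open>j = c\<close> by (auto simp: badp_def)
        qed
      qed
      have "Max ?A = w a" by (rule Max_eqI[OF fin]) (use le mem in blast)+
      then show ?thesis using uaw by (simp add: condI_def)
    qed
    have cII: "condII k u w a b"
    proof -
      let ?B = "{w j | j. j > k \<and> u j > u a \<and> u a \<ge> w j}"
      have fin: "finite ?B" by (rule finite_subset[of _ "{..u a}"]) auto
      have wb: "w b \<le> u a" using kchain_mono[OF h(5) S, of b] h(3) v1b by simp
      have mem: "w b \<in> ?B" using h(3) sf(1) wb by auto
      have le: "\<forall>y\<in>?B. w b \<le> y"
      proof
        fix y assume "y \<in> ?B"
        then obtain j where j: "y = w j" "k < j" "u j > u a" by blast
        show "w b \<le> y"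
        proof (rule ccontr)
          assume "\<not> w b \<le> y"
          then have "w j < w b" using j by simp
          then show False using claimG[OF kc Cons.prems(2,3)] Cons.prems(5) p j by simp
        qed
      qed
      have "Min ?B = w b" by (rule Min_eqI[OF fin]) (use le mem in blast)+
      then show ?thesis using sf(1) wb by (simp add: condII_def)
    qed
    show ?thesis using cm_step[OF props[THEN conjunct2, THEN conjunct2] lenw h(1,2,3) cI cII cm1] p by simp
  qed
qed

lemma fwddir:
  "cm_chain k u w ps \<Longrightarrow> kchain k u w ps \<Longrightarrow> u \<in> S_inf \<Longrightarrow> inj w \<Longrightarrow> noinv w ps"
proof (induction rule: cm_chain.induct)
  case (cm_base u w a b)
  then show ?case by simp
next
  case (cm_step u w a b ps)
  have h: "len (pswap u a b) = len u + 1" "kchain k (pswap u a b) w ps"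
    using cm_step.prems by auto
  have S: "pswap u a b \<in> S_inf" using pswap_S_inf[OF cm_step.prems(2)] cm_step.hyps(3,5) by simp
  have IH: "noinv w ps" using cm_step.IH[OF h(2) S cm_step.prems(3)] .
  have "\<forall>y\<in>set ps. \<not> badp w (a,b) y"
  proof
    fix y assume y: "y \<in> set ps"
    obtain c d where yc: "y = (c,d)" by fastforce
    then have cdin: "(c,d) \<in> set ((a,b) # ps)" using y by simp
    note st = step_in[OF cm_step.prems(1,2) cdin]
    let ?A = "{w j | j. 1 \<le> j \<and> j \<le> k \<and> u j < w j}"
    have finA: "finite ?A" by (rule finite_subset[of _ "w ` {1..k}"]) auto
    have "w c \<in> ?A" using st by auto
    then have wc: "w c \<le> w a" using Max_ge[OF finA] cm_step.hyps(6) by (simp add: condI_def)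
    have "\<not> (w a = w c \<and> w b > w d)"
    proof
      assume H: "w a = w c \<and> w b > w d"
      then have "a = c" using cm_step.prems(3) by (auto dest: injD)
      let ?B = "{w j | j. j > k \<and> u j > u a \<and> u a \<ge> w j}"
      have finB: "finite ?B" by (rule finite_subset[of _ "{..u a}"]) auto
      have c2: "u a < u b" "w b \<le> u a" "w b = Min ?B" using cm_step.hyps(7) by (auto simp: condII_def)
      show False
      proof (cases "w d \<le> u a")
        case True
        then have "w d \<in> ?B" using st \<open>a = c\<close> by auto
        then have "Min ?B \<le> w d" using Min_le[OF finB] by blast
        then show False using H c2 by simp
      next
        case False then show False using H c2 by simp
      qed
    qed
    then show "\<not> badp w (a,b) y" using wc yc by (auto simp: badp_def)
  qed
  then show ?case using IH by simp
qed

theorem mainTheorem3: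
  fixes k :: nat and u w :: "nat \<Rightarrow> nat" and ps :: "(nat \<times> nat) list"
  assumes "k \<ge> 1" and "u \<in> S_inf" and "w \<in> S_inf"
    and "kle k u w" and "u \<noteq> w"
    and "kchain k u w ps"
  shows "cm_chain k u w ps \<longleftrightarrow> chain_inversions w ps = {}"
proof -
  have iw: "inj w" using S_inf_inj[OF assms(3)] .
  have ne: "ps \<noteq> []" using assms(5,6) by auto
  show ?thesis unfolding noinv_iff
    using fwddir[OF _ assms(6) assms(2) iw] backdir[OF assms(6) assms(2) iw ne] by blast
qed


end
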